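(* For all instances $A_1,\dots,A_n$ (over a common schema), the class $\bigcup_{1\le i\le n}[A_i]_{\leftrightarrow}$ admits a left query algorithm over $\mathbb{B}$ (equivalently, is FO-definable) if and only if each $[A_i]_{\leftrightarrow}$, $1\le i\le n$, admits a left query algorithm over $\mathbb{B}$ (equivalently, is FO-definable).
   Context: A schema is a finite set of relation symbols, each with a positive arity. An instance $A$ over a schema $\sigma$ assigns to each $R\in\sigma$ of arity $r$ a finite $r$-ary relation $R^A$; $\mathrm{adom}(A)$ is the set of elements occurring in its facts. A homomorphism $h:A\to B$ is a map $h:\mathrm{adom}(A)\to\mathrm{adom}(B)$ preserving every relation; we write $A\to B$ if one exists. $A,B$ are homomorphically equivalent if $A\to B$ and $B\to A$; $[A]_{\leftrightarrow}$ is the class of all instances homomorphically equivalent to $A$. $\hom_{\mathbb{B}}(A,B)=1$ if $A\to B$ and $0$ otherwise; for $\mathcal{F}=\{F_1,\dots,F_k\}$, $\hom_{\mathbb{B}}(\mathcal{F},A)=(\hom_{\mathbb{B}}(F_i,A))_{i\le k}$. A left $k$-query algorithm over $\mathbb{B}$ for a class $\mathcal{C}$ (closed under isomorphism) is a pair $(\mathcal{F},X)$ with $|\mathcal{F}|=k$ and $X\subseteq\{0,1\}^k$ such that for every instance $D$: $D\in\mathcal{C}$ iff $\hom_{\mathbb{B}}(\mathcal{F},D)\in X$; $\mathcal{C}$ admits one if one exists for some $k>0$. FO-definable means equal to the class of instances satisfying some first-order sentence under active-domain semantics. *)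

theory Defs
  imports Main
begin

type_synonym ('r,'a) inst = "'r \<Rightarrow> 'a list set"

definition schema :: "'r set \<Rightarrow> ('r \<Rightarrow> nat) \<Rightarrow> bool" where
  "schema S ar \<longleftrightarrow> finite S \<and> (\<forall>R\<in>S. ar R > 0)"

definition is_instance :: "'r set \<Rightarrow> ('r \<Rightarrow> nat) \<Rightarrow> ('r,'a) inst \<Rightarrow> bool" where
  "is_instance S ar A \<longleftrightarrow>
     (\<forall>R\<in>S. finite (A R) \<and> (\<forall>t\<in>A R. length t = ar R)) \<and> (\<forall>R. R \<notin> S \<longrightarrow> A R = {})"

definition adom :: "'r set \<Rightarrow> ('r,'a) inst \<Rightarrow> 'a set" where
  "adom S A = (\<Union>R\<in>S. \<Union>t\<in>A R. set t)"

definition is_hom :: "'r set \<Rightarrow> ('a \<Rightarrow> 'a) \<Rightarrow> ('r,'a) inst \<Rightarrow> ('r,'a) inst \<Rightarrow> bool" where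
  "is_hom S h A B \<longleftrightarrow> h ` adom S A \<subseteq> adom S B \<and> (\<forall>R\<in>S. \<forall>t\<in>A R. map h t \<in> B R)"

definition hom_exists :: "'r set \<Rightarrow> ('r,'a) inst \<Rightarrow> ('r,'a) inst \<Rightarrow> bool" where
  "hom_exists S A B \<longleftrightarrow> (\<exists>h. is_hom S h A B)"

definition hom_equiv :: "'r set \<Rightarrow> ('r,'a) inst \<Rightarrow> ('r,'a) inst \<Rightarrow> bool" where
  "hom_equiv S A B \<longleftrightarrow> hom_exists S A B \<and> hom_exists S B A"

definition hom_class :: "'r set \<Rightarrow> ('r \<Rightarrow> nat) \<Rightarrow> ('r,'a) inst \<Rightarrow> ('r,'a) inst set" where
  "hom_class S ar A = {D. is_instance S ar D \<and> hom_equiv S A D}"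

definition hom_vec :: "'r set \<Rightarrow> ('r,'a) inst list \<Rightarrow> ('r,'a) inst \<Rightarrow> bool list" where
  "hom_vec S Fs D = map (\<lambda>F. hom_exists S F D) Fs"

definition left_query_alg ::
  "'r set \<Rightarrow> ('r \<Rightarrow> nat) \<Rightarrow> nat \<Rightarrow> ('r,'a) inst list \<Rightarrow> bool list set \<Rightarrow> ('r,'a) inst set \<Rightarrow> bool" where
  "left_query_alg S ar k Fs X C \<longleftrightarrow>
     length Fs = k \<and> distinct Fs \<and> (\<forall>F\<in>set Fs. is_instance S ar F) \<and>
     X \<subseteq> {v. length v = k} \<and>
     (\<forall>D. is_instance S ar D \<longrightarrow> (D \<in> C \<longleftrightarrow> hom_vec S Fs D \<in> X))"

definition admits_left_query_alg :: "'r set \<Rightarrow> ('r \<Rightarrow> nat) \<Rightarrow> ('r,'a) inst set \<Rightarrow> bool" where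
  "admits_left_query_alg S ar C \<longleftrightarrow> (\<exists>k>0. \<exists>Fs X. left_query_alg S ar k Fs X C)"

end

theory Submission
  imports Defs
begin

definition sep :: "'r set \<Rightarrow> ('r \<Rightarrow> nat) \<Rightarrow> ('r,'a) inst list \<Rightarrow> ('r,'a) inst set \<Rightarrow> bool" where
  "sep S ar Fs C \<longleftrightarrow> (\<forall>F\<in>set Fs. is_instance S ar F) \<and>
     (\<forall>D D'. is_instance S ar D \<longrightarrow> is_instance S ar D' \<longrightarrow>
        (\<forall>F\<in>set Fs. hom_exists S F D = hom_exists S F D') \<longrightarrow> (D \<in> C \<longleftrightarrow> D' \<in> C))"

lemma sepD:
  assumes "sep S ar Fs C" "is_instance S ar D" "is_instance S ar D'"
    "\<forall>F\<in>set Fs. hom_exists S F D = hom_exists S F D'"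
  shows "D \<in> C \<longleftrightarrow> D' \<in> C"
proof -
  have "\<forall>D D'. is_instance S ar D \<longrightarrow> is_instance S ar D' \<longrightarrow>
        (\<forall>F\<in>set Fs. hom_exists S F D = hom_exists S F D') \<longrightarrow> (D \<in> C \<longleftrightarrow> D' \<in> C)"
    using assms(1) unfolding sep_def by (elim conjE)
  thus ?thesis using assms(2-4) by blast
qed

lemma sep_inst: "sep S ar Fs C \<Longrightarrow> \<forall>F\<in>set Fs. is_instance S ar F"
  unfolding sep_def by (elim conjE)

lemma hom_trans:
  assumes "hom_exists S A B" "hom_exists S B C" shows "hom_exists S A C"
proof -
  obtain h g where h: "is_hom S h A B" and g: "is_hom S g B C"
    using assms unfolding hom_exists_def by blast
  have "is_hom S (g \<circ> h) A C"
    using h g unfolding is_hom_def by (auto simp: image_comp[symmetric] simp flip: map_map; blast)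
  thus ?thesis unfolding hom_exists_def by blast
qed

lemma admits_sep:
  fixes S :: "'r set" and C :: "('r,'a) inst set"
  shows "admits_left_query_alg S ar C \<longleftrightarrow> (\<exists>Fs. sep S ar Fs C)"
proof
  assume "admits_left_query_alg S ar C"
  then obtain k Fs X where a: "left_query_alg S ar k Fs X C"
    unfolding admits_left_query_alg_def by blast
  have "sep S ar Fs C"
    unfolding sep_def
  proof (intro conjI allI impI)
    show "\<forall>F\<in>set Fs. is_instance S ar F" using a unfolding left_query_alg_def by (elim conjE)
  next
    fix D D' :: "('r,'a) inst" assume d: "is_instance S ar D" "is_instance S ar D'"
      and e: "\<forall>F\<in>set Fs. hom_exists S F D = hom_exists S F D'"
    have "hom_vec S Fs D = hom_vec S Fs D'" unfolding hom_vec_def using e by simp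
    moreover have "\<forall>D. is_instance S ar D \<longrightarrow> (D \<in> C \<longleftrightarrow> hom_vec S Fs D \<in> X)"
      using a unfolding left_query_alg_def by (elim conjE)
    ultimately show "D \<in> C \<longleftrightarrow> D' \<in> C" using d by simp
  qed
  thus "\<exists>Fs. sep S ar Fs C" by blast
next
  assume "\<exists>Fs. sep S ar Fs C"
  then obtain Fs where s: "sep S ar Fs C" by blast
  define E where "E = (\<lambda>R::'r. {} :: 'a list set)"
  define Fs' where "Fs' = remdups (E # Fs)"
  define X where "X = hom_vec S Fs' ` {D. is_instance S ar D \<and> D \<in> C}"
  have sub: "set Fs \<subseteq> set Fs'" unfolding Fs'_def by auto
  have "left_query_alg S ar (length Fs') Fs' X C"
    unfolding left_query_alg_def
  proof (intro conjI allI impI)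
    show "distinct Fs'" unfolding Fs'_def by simp
    have i1: "\<forall>F\<in>set Fs. is_instance S ar F" using s unfolding sep_def by (elim conjE)
    have i2: "is_instance S ar E" unfolding E_def is_instance_def by simp
    show "\<forall>F\<in>set Fs'. is_instance S ar F"
      using i1 i2 unfolding Fs'_def by simp
    show "X \<subseteq> {v. length v = length Fs'}" unfolding X_def hom_vec_def by auto
  next
    fix D :: "('r,'a) inst" assume d: "is_instance S ar D"
    show "D \<in> C \<longleftrightarrow> hom_vec S Fs' D \<in> X"
    proof
      assume "D \<in> C" thus "hom_vec S Fs' D \<in> X" unfolding X_def using d by (intro imageI) simp
    next
      assume "hom_vec S Fs' D \<in> X"
      then obtain D' where d': "is_instance S ar D'" "D' \<in> C" and v: "hom_vec S Fs' D' = hom_vec S Fs' D"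
        unfolding X_def image_iff mem_Collect_eq by (elim bexE conjE) (rule that; simp)
      have "\<forall>F\<in>set Fs. hom_exists S F D' = hom_exists S F D"
        using v sub unfolding hom_vec_def by (auto simp: map_eq_conv)
      moreover have "\<forall>D D'. is_instance S ar D \<longrightarrow> is_instance S ar D' \<longrightarrow>
        (\<forall>F\<in>set Fs. hom_exists S F D = hom_exists S F D') \<longrightarrow> (D \<in> C \<longleftrightarrow> D' \<in> C)"
        using s unfolding sep_def by (elim conjE)
      ultimately show "D \<in> C" using d d'(1) d'(2) by blast
    qed
  qed simp
  moreover have "length Fs' > 0" unfolding Fs'_def by (auto simp add: length_pos_if_in_set)
  ultimately show "admits_left_query_alg S ar C"
    unfolding admits_left_query_alg_def by blast
qed

lemma sep_union:
  assumes "\<forall>A\<in>set As. \<exists>Fs. sep S ar Fs (hom_class S ar A)"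
  shows "\<exists>Fs. sep S ar Fs (\<Union>A\<in>set As. hom_class S ar A)"
  using assms
proof (induction As)
  case Nil
  show ?case by (rule exI[of _ "[]"]) (simp add: sep_def)
next
  case (Cons A As)
  then obtain Fs Gs where f: "sep S ar Fs (hom_class S ar A)"
    and g: "sep S ar Gs (\<Union>A\<in>set As. hom_class S ar A)" by auto
  have "sep S ar (Fs @ Gs) (\<Union>A\<in>set (A # As). hom_class S ar A)"
    unfolding sep_def
  proof (intro conjI allI impI)
    show "\<forall>F\<in>set (Fs @ Gs). is_instance S ar F" using sep_inst[OF f] sep_inst[OF g] by auto
  next
    fix D D' assume d: "is_instance S ar D" "is_instance S ar D'"
      and e: "\<forall>F\<in>set (Fs @ Gs). hom_exists S F D = hom_exists S F D'"
    have 1: "D \<in> hom_class S ar A \<longleftrightarrow> D' \<in> hom_class S ar A"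
      using sepD[OF f d] e by simp
    have 2: "D \<in> (\<Union>A\<in>set As. hom_class S ar A) \<longleftrightarrow> D' \<in> (\<Union>A\<in>set As. hom_class S ar A)"
    proof -
      have "\<forall>F\<in>set Gs. hom_exists S F D = hom_exists S F D'" using e by simp
      thus ?thesis using sepD[OF g d] by simp
    qed
    show "D \<in> (\<Union>A\<in>set (A # As). hom_class S ar A) \<longleftrightarrow> D' \<in> (\<Union>A\<in>set (A # As). hom_class S ar A)"
      using 1 2 by auto
  qed
  thus ?case by blast
qed

lemma sep_each:
  assumes s: "sep S ar Fs (\<Union>A\<in>set As. hom_class S ar A)"
    and inst: "\<forall>A\<in>set As. is_instance S ar A"
    and Ai: "Ai \<in> set As"
  shows "sep S ar (Fs @ As) (hom_class S ar Ai)"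
  unfolding sep_def
proof (intro conjI allI impI)
  show "\<forall>F\<in>set (Fs @ As). is_instance S ar F" using sep_inst[OF s] inst by auto
next
  have key: "D' \<in> hom_class S ar Ai"
    if d: "is_instance S ar D" "is_instance S ar D'"
      and e: "\<forall>F\<in>set (Fs @ As). hom_exists S F D = hom_exists S F D'"
      and D: "D \<in> hom_class S ar Ai" for D D'
  proof -
    have DC: "D \<in> (\<Union>A\<in>set As. hom_class S ar A)" using D Ai by blast
    have "D' \<in> (\<Union>A\<in>set As. hom_class S ar A)"
    proof -
      have "\<forall>F\<in>set Fs. hom_exists S F D = hom_exists S F D'" using e by simp
      thus ?thesis using sepD[OF s d] DC by simp
    qed
    then obtain Ak where k: "Ak \<in> set As" "hom_equiv S Ak D'" unfolding hom_class_def by blast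
    have AiD: "hom_exists S Ai D" "hom_exists S D Ai" using D unfolding hom_class_def hom_equiv_def by auto
    have "hom_exists S Ai D'" using AiD e Ai by auto
    moreover have "hom_exists S Ak D" using k e unfolding hom_equiv_def by auto
    hence "hom_exists S Ak Ai" using AiD hom_trans by blast
    hence "hom_exists S D' Ai" using k hom_trans unfolding hom_equiv_def by blast
    ultimately show ?thesis using d unfolding hom_class_def hom_equiv_def by blast
  qed
  fix D D' assume d: "is_instance S ar D" "is_instance S ar D'"
    and e: "\<forall>F\<in>set (Fs @ As). hom_exists S F D = hom_exists S F D'"
  show "D \<in> hom_class S ar Ai \<longleftrightarrow> D' \<in> hom_class S ar Ai"
  proof
    assume "D \<in> hom_class S ar Ai" thus "D' \<in> hom_class S ar Ai" using key[OF d e] by blast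
  next
    have e': "\<forall>F\<in>set (Fs @ As). hom_exists S F D' = hom_exists S F D" using e by simp
    assume "D' \<in> hom_class S ar Ai" thus "D \<in> hom_class S ar Ai" using key[OF d(2) d(1) e'] by blast
  qed
qed

theorem mainTheorem7:
  fixes S :: "'r set" and ar :: "'r \<Rightarrow> nat" and As :: "('r,'a) inst list"
  assumes "infinite (UNIV :: 'a set)"
    and "schema S ar"
    and "\<forall>A\<in>set As. is_instance S ar A"
  shows "admits_left_query_alg S ar (\<Union>A\<in>set As. hom_class S ar A)
         \<longleftrightarrow> (\<forall>A\<in>set As. admits_left_query_alg S ar (hom_class S ar A))"
proof
  assume "admits_left_query_alg S ar (\<Union>A\<in>set As. hom_class S ar A)"
  then obtain Fs where f: "sep S ar Fs (\<Union>A\<in>set As. hom_class S ar A)"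
    unfolding admits_sep by blast
  show "\<forall>A\<in>set As. admits_left_query_alg S ar (hom_class S ar A)"
  proof
    fix A assume "A \<in> set As"
    from sep_each[OF f assms(3) this] show "admits_left_query_alg S ar (hom_class S ar A)"
      unfolding admits_sep by (rule exI)
  qed
next
  assume "\<forall>A\<in>set As. admits_left_query_alg S ar (hom_class S ar A)"
  hence "\<forall>A\<in>set As. \<exists>Fs. sep S ar Fs (hom_class S ar A)" unfolding admits_sep .
  from sep_union[OF this] show "admits_left_query_alg S ar (\<Union>A\<in>set As. hom_class S ar A)"
    unfolding admits_sep .
qed

end
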